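(* Let $n$ be even and $p=n/2$. (1) If $\mathcal{A}\subseteq\mathcal{K}^n_{p-1}$ is a set of $(p-1)$-faces with $|\mathcal{A}|\le n/32$, then $|\partial^+\mathcal{A}|\ge|\mathcal{A}|\cdot(n/2+1)\cdot(15/16)$. (2) If $\mathcal{A}\subseteq\mathcal{K}^n_{p+1}$ is a set of $(p+1)$-faces with $|\mathcal{A}|\le n/8$, then $|\partial^-\mathcal{A}|\ge 2\cdot|\mathcal{A}|\cdot(n/2+1)\cdot(15/16)$.
   Context: An $r$-face of the $n$-dimensional binary cube is a word in $\{0,1,*\}^n$ with exactly $r$ entries equal to $*$; $\mathcal{K}^n_r$ is the set of all $r$-faces. The upper shadow $\partial^+$ of an $r$-face is the set of $(r+1)$-faces obtained by replacing one non-$*$ entry by $*$; the lower shadow $\partial^-$ of an $r$-face is the set of $(r-1)$-faces obtained by replacing one $*$ entry by $0$ or by $1$. For a set $\mathcal{A}$ of faces, $\partial^\pm\mathcal{A}$ is the union of the shadows of its elements. *)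

theory Defs
  imports Complex_Main
begin

datatype sym = Zero | One | Star

definition faces :: "nat \<Rightarrow> nat \<Rightarrow> sym list set" where
  "faces n r = {w. length w = n \<and> length (filter (\<lambda>c. c = Star) w) = r}"

definition upper_shadow_face :: "sym list \<Rightarrow> sym list set" where
  "upper_shadow_face w = {w[i := Star] | i. i < length w \<and> w ! i \<noteq> Star}"

definition lower_shadow_face :: "sym list \<Rightarrow> sym list set" where
  "lower_shadow_face w = {w[i := c] | i c. i < length w \<and> w ! i = Star \<and> c \<in> {Zero, One}}"

definition upper_shadow :: "sym list set \<Rightarrow> sym list set" where
  "upper_shadow A = (\<Union>w\<in>A. upper_shadow_face w)"

definition lower_shadow :: "sym list set \<Rightarrow> sym list set" where
  "lower_shadow A = (\<Union>w\<in>A. lower_shadow_face w)"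

end

theory Submission
  imports Defs
begin

lemma union_bound:
  fixes f :: "'a \<Rightarrow> 'b set" and m :: nat
  assumes "finite A" "\<forall>a\<in>A. finite (f a) \<and> card (f a) \<ge> m"
    "\<forall>a\<in>A. \<forall>b\<in>A. a \<noteq> b \<longrightarrow> card (f a \<inter> f b) \<le> 1"
  shows "real (card (\<Union>a\<in>A. f a)) \<ge> real (card A) * m - real (card A) * (real (card A) - 1) / 2"
  using assms
proof (induction A rule: finite_induct)
  case empty
  then show ?case by simp
next
  case (insert x F)
  define U where "U = (\<Union>a\<in>F. f a)"
  have IH: "real (card U) \<ge> real (card F) * m - real (card F) * (real (card F) - 1) / 2"
    using insert unfolding U_def by auto
  have finU: "finite U" using insert unfolding U_def by auto
  have finx: "finite (f x)" and cx: "card (f x) \<ge> m" using insert by auto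
  have "f x \<inter> U = (\<Union>b\<in>F. f x \<inter> f b)" unfolding U_def by auto
  hence "card (f x \<inter> U) \<le> (\<Sum>b\<in>F. card (f x \<inter> f b))"
    using card_UN_le[OF insert(1), of "\<lambda>b. f x \<inter> f b"] by simp
  also have "\<dots> \<le> (\<Sum>b\<in>F. 1)"
    apply (rule sum_mono) using insert by (metis insertCI)
  finally have ci: "card (f x \<inter> U) \<le> card F" by simp
  have cu: "card (f x) + card U = card (f x \<union> U) + card (f x \<inter> U)"
    using card_Un_Int[OF finx finU] .
  have eq: "(\<Union>a\<in>insert x F. f a) = f x \<union> U" unfolding U_def by auto
  have ci': "card (insert x F) = card F + 1" using insert by simp
  have r1: "real (card (f x \<union> U)) \<ge> real m + real (card U) - real (card F)"
    using cu ci cx by linarith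
  have "real (card F + 1) * m - real (card F + 1) * (real (card F + 1) - 1) / 2
     = real m + (real (card F) * m - real (card F) * (real (card F) - 1) / 2) - real (card F)"
    by (simp add: field_simps)
  then show ?case unfolding eq ci' using r1 IH by linarith
qed

lemma UNIV_sym: "(UNIV :: sym set) = {Zero, One, Star}"
  using sym.exhaust by auto

lemma finite_faces: "finite (faces n r)"
proof -
  have "faces n r \<subseteq> {xs. set xs \<subseteq> UNIV \<and> length xs = n}" unfolding faces_def by auto
  moreover have "finite {xs. set xs \<subseteq> (UNIV :: sym set) \<and> length xs = n}"
    by (rule finite_lists_length_eq) (simp add: UNIV_sym)
  ultimately show ?thesis by (rule finite_subset)
qed

lemma card_upper:
  assumes "w \<in> faces n r"
  shows "finite (upper_shadow_face w) \<and> card (upper_shadow_face w) = n - r"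
proof -
  let ?I = "{i. i < length w \<and> w ! i \<noteq> Star}"
  have img: "upper_shadow_face w = (\<lambda>i. w[i := Star]) ` ?I"
    unfolding upper_shadow_face_def by auto
  have inj: "inj_on (\<lambda>i. w[i := Star]) ?I"
  proof (rule inj_onI)
    fix i j assume "i \<in> ?I" "j \<in> ?I" "w[i := Star] = w[j := Star]"
    then show "i = j" by (metis (mono_tags, lifting) nth_list_update_eq nth_list_update_neq mem_Collect_eq)
  qed
  have "card ?I = length (filter (\<lambda>c. c \<noteq> Star) w)"
    by (simp add: length_filter_conv_card)
  moreover have "length (filter (\<lambda>c. c = Star) w) + length (filter (\<lambda>c. \<not> c = Star) w) = length w"
    by (rule sum_length_filter_compl)
  ultimately have "card ?I = n - r" using assms unfolding faces_def by auto
  moreover have "finite ?I" by simp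
  ultimately show ?thesis using img inj card_image by (metis finite_imageI)
qed

lemma card_lower:
  assumes "w \<in> faces n r"
  shows "finite (lower_shadow_face w) \<and> card (lower_shadow_face w) = 2 * r"
proof -
  let ?I = "{i. i < length w \<and> w ! i = Star} \<times> {Zero, One}"
  have img: "lower_shadow_face w = (\<lambda>(i,c). w[i := c]) ` ?I"
    unfolding lower_shadow_face_def by auto
  have inj: "inj_on (\<lambda>(i,c). w[i := c]) ?I"
  proof (rule inj_onI)
    fix x y assume a: "x \<in> ?I" "y \<in> ?I" "(\<lambda>(i,c). w[i := c]) x = (\<lambda>(i,c). w[i := c]) y"
    obtain i c where x: "x = (i,c)" by fastforce
    obtain j d where y: "y = (j,d)" by fastforce
    have e: "w[i := c] = w[j := d]" using a x y by simp
    have ii: "i < length w" "w ! i = Star" "c \<noteq> Star" using a x by auto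
    have jj: "j < length w" "w ! j = Star" "d \<noteq> Star" using a y by auto
    have "i = j"
    proof (rule ccontr)
      assume "i \<noteq> j"
      hence "w[i := c] ! i = w ! i" using e ii by (metis nth_list_update_neq nth_list_update_eq)
      thus False using ii by simp
    qed
    moreover have "c = d" using e ii `i = j` by (metis nth_list_update_eq)
    ultimately show "x = y" using x y by simp
  qed
  have "card {i. i < length w \<and> w ! i = Star} = r"
    using assms unfolding faces_def by (clarsimp simp add: length_filter_conv_card)
  hence "card ?I = 2 * r" by (simp add: card_cartesian_product)
  then show ?thesis using img inj card_image by fastforce
qed

lemma card_le_1_sub:
  assumes "S \<subseteq> {a}" shows "card S \<le> 1"
  using card_mono[OF _ assms] by simp

lemma upper_inter:
  assumes "u \<noteq> v" "length u = length v"
  shows "card (upper_shadow_face u \<inter> upper_shadow_face v) \<le> 1"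
proof -
  have key: "w = map2 (\<lambda>a b. if a = b then a else Star) u v"
    if wA: "w \<in> upper_shadow_face u \<inter> upper_shadow_face v" for w
  proof -
    obtain i where i: "w = u[i := Star]" "i < length u" "u ! i \<noteq> Star"
      using wA unfolding upper_shadow_face_def by auto
    obtain j where j: "w = v[j := Star]" "j < length v" "v ! j \<noteq> Star"
      using wA unfolding upper_shadow_face_def by auto
    have lw: "length w = length u" using i by simp
    have wi: "w ! i = Star" using i by simp
    have wj: "w ! j = Star" using j by simp
    have wu: "w ! k = u ! k" if "k \<noteq> i" for k using i that by simp
    have wv: "w ! k = v ! k" if "k \<noteq> j" for k using j that by simp
    have uvi: "u ! i \<noteq> v ! i"
    proof
      assume ek: "u ! i = v ! i"
      show False
      proof (cases "i = j")
        case True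
        have "u ! q = v ! q" if q: "q < length u" for q
        proof (cases "q = i")
          case True thus ?thesis using ek by simp
        next
          case False thus ?thesis using wu wv \<open>i = j\<close> by metis
        qed
        hence "u = v" using assms(2) by (intro nth_equalityI) auto
        thus False using assms by simp
      next
        case False
        then show False using wv[of i] wi ek i(3) by simp
      qed
    qed
    have uvj: "u ! j \<noteq> v ! j"
    proof (cases "i = j")
      case True then show ?thesis using uvi by simp
    next
      case False
      then show ?thesis using wu[of j] wj j(3) by simp
    qed
    show ?thesis
    proof (rule nth_equalityI)
      show "length w = length (map2 (\<lambda>a b. if a = b then a else Star) u v)"
        using lw assms by simp
      fix k assume k: "k < length w"
      have mk: "map2 (\<lambda>a b. if a = b then a else Star) u v ! k = (if u ! k = v ! k then u ! k else Star)"
        using k lw assms by simp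
      show "w ! k = map2 (\<lambda>a b. if a = b then a else Star) u v ! k"
        unfolding mk
      proof (cases "k = i \<or> k = j")
        case True
        then show "w ! k = (if u ! k = v ! k then u ! k else Star)" using uvi uvj wi wj by auto
      next
        case False
        then show "w ! k = (if u ! k = v ! k then u ! k else Star)" using wu[of k] wv[of k] by auto
      qed
    qed
  qed
  show ?thesis by (rule card_le_1_sub) (use key in blast)
qed

lemma lower_inter:
  assumes "u \<noteq> v" "length u = length v"
  shows "card (lower_shadow_face u \<inter> lower_shadow_face v) \<le> 1"
proof -
  have key: "w = map2 (\<lambda>a b. if a = Star then b else a) u v"
    if wA: "w \<in> lower_shadow_face u \<inter> lower_shadow_face v" for w
  proof -
    obtain i c where i: "w = u[i := c]" "i < length u" "u ! i = Star" "c \<in> {Zero, One}"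
      using wA unfolding lower_shadow_face_def by auto
    obtain j d where j: "w = v[j := d]" "j < length v" "v ! j = Star" "d \<in> {Zero, One}"
      using wA unfolding lower_shadow_face_def by auto
    have lw: "length w = length u" using i by simp
    have wi: "w ! i = c" using i by simp
    have wj: "w ! j = d" using j by simp
    have wu: "w ! k = u ! k" if "k \<noteq> i" for k using i that by simp
    have wv: "w ! k = v ! k" if "k \<noteq> j" for k using j that by simp
    have ij: "i \<noteq> j"
    proof
      assume "i = j"
      have "u ! q = v ! q" if q: "q < length u" for q
      proof (cases "q = i")
        case True thus ?thesis using i j \<open>i = j\<close> by simp
      next
        case False thus ?thesis using wu wv \<open>i = j\<close> by metis
      qed
      hence "u = v" using assms(2) by (intro nth_equalityI) auto
      thus False using assms by simp
    qed
    show ?thesis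
    proof (rule nth_equalityI)
      show "length w = length (map2 (\<lambda>a b. if a = Star then b else a) u v)"
        using lw assms by simp
      fix k assume k: "k < length w"
      have mk: "map2 (\<lambda>a b. if a = Star then b else a) u v ! k = (if u ! k = Star then v ! k else u ! k)"
        using k lw assms by simp
      show "w ! k = map2 (\<lambda>a b. if a = Star then b else a) u v ! k"
        unfolding mk
      proof (cases "k = i")
        case True
        then show "w ! k = (if u ! k = Star then v ! k else u ! k)" using wv ij i(3) by auto
      next
        case False
        then show "w ! k = (if u ! k = Star then v ! k else u ! k)"
          using wu[of k] wv[of k] wj j(4) by (cases "k = j") auto
      qed
    qed
  qed
  show ?thesis by (rule card_le_1_sub) (use key in blast)
qed

lemma arith_final:
  fixes k M c :: real
  assumes "k \<ge> 0" "(k - 1) / 2 \<le> M / 16" "X \<ge> k * M - k * (k - 1) / 2"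
  shows "X \<ge> k * M * (15 / 16)"
proof -
  have "k * ((k - 1) / 2) \<le> k * (M / 16)" using assms by (intro mult_left_mono) auto
  hence "k * (k - 1) / 2 \<le> k * M / 16" by simp
  thus ?thesis using assms(3) by linarith
qed

theorem mainTheorem3:
  fixes n p :: nat
  assumes "even n" and "p = n div 2"
  shows "(\<forall>A. A \<subseteq> faces n (p - 1) \<and> real (card A) \<le> real n / 32 \<longrightarrow>
            real (card (upper_shadow A)) \<ge> real (card A) * (real n / 2 + 1) * (15 / 16))
       \<and> (\<forall>A. A \<subseteq> faces n (p + 1) \<and> real (card A) \<le> real n / 8 \<longrightarrow>
            real (card (lower_shadow A)) \<ge> 2 * real (card A) * (real n / 2 + 1) * (15 / 16))"
proof (intro conjI allI impI)
  fix A assume a: "A \<subseteq> faces n (p - 1) \<and> real (card A) \<le> real n / 32"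
  have finA: "finite A" using a finite_faces finite_subset by blast
  show "real (card (upper_shadow A)) \<ge> real (card A) * (real n / 2 + 1) * (15 / 16)"
  proof (cases "A = {}")
    case True then show ?thesis by simp
  next
    case False
    have "real (card A) \<ge> 1" using False finA by (simp add: Suc_le_eq card_gt_0_iff)
    hence n32: "real n \<ge> 32" using a by linarith
    hence pp: "n - (p - 1) = n div 2 + 1" using assms by auto
    have "real (card (\<Union>a\<in>A. upper_shadow_face a)) \<ge>
        real (card A) * real (n div 2 + 1) - real (card A) * (real (card A) - 1) / 2"
    proof (rule union_bound[OF finA]; intro ballI impI)
      fix x assume "x \<in> A"
      hence "x \<in> faces n (p - 1)" using a by blast
      thus "finite (upper_shadow_face x) \<and> n div 2 + 1 \<le> card (upper_shadow_face x)"
        using card_upper[of x n "p - 1"] pp by simp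
    next
      fix x y assume "x \<in> A" "y \<in> A" "x \<noteq> y"
      hence "x \<in> faces n (p - 1)" "y \<in> faces n (p - 1)" using a by blast+
      thus "card (upper_shadow_face x \<inter> upper_shadow_face y) \<le> 1"
        using upper_inter[OF \<open>x \<noteq> y\<close>] unfolding faces_def by simp
    qed
    moreover have "real (n div 2 + 1) = real n / 2 + 1" using assms by auto
    ultimately have bnd: "real (card (\<Union>a\<in>A. upper_shadow_face a)) \<ge>
        real (card A) * (real n / 2 + 1) - real (card A) * (real (card A) - 1) / 2"
      by metis
    show ?thesis unfolding upper_shadow_def
      by (rule arith_final[OF _ _ bnd]) (use a in auto)
  qed
next
  fix A assume a: "A \<subseteq> faces n (p + 1) \<and> real (card A) \<le> real n / 8"
  have finA: "finite A" using a finite_faces finite_subset by blast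
  have "real (card (\<Union>a\<in>A. lower_shadow_face a)) \<ge>
        real (card A) * real (2 * (p + 1)) - real (card A) * (real (card A) - 1) / 2"
  proof (rule union_bound[OF finA]; intro ballI impI)
    fix x assume "x \<in> A"
    hence "x \<in> faces n (p + 1)" using a by blast
    thus "finite (lower_shadow_face x) \<and> 2 * (p + 1) \<le> card (lower_shadow_face x)"
      using card_lower[of x n "p + 1"] by simp
  next
    fix x y assume "x \<in> A" "y \<in> A" "x \<noteq> y"
    hence "x \<in> faces n (p + 1)" "y \<in> faces n (p + 1)" using a by blast+
    thus "card (lower_shadow_face x \<inter> lower_shadow_face y) \<le> 1"
      using lower_inter[OF \<open>x \<noteq> y\<close>] unfolding faces_def by simp
  qed
  moreover have "real (2 * (p + 1)) = 2 * (real n / 2 + 1)" using assms by auto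
  ultimately have bnd: "real (card (\<Union>a\<in>A. lower_shadow_face a)) \<ge>
        real (card A) * (2 * (real n / 2 + 1)) - real (card A) * (real (card A) - 1) / 2"
    by metis
  have "real (card (lower_shadow A)) \<ge> real (card A) * (2 * (real n / 2 + 1)) * (15/16)"
    unfolding lower_shadow_def
    by (rule arith_final[OF _ _ bnd]) (use a in auto)
  then show "real (card (lower_shadow A)) \<ge> 2 * real (card A) * (real n / 2 + 1) * (15 / 16)"
    by (simp add: algebra_simps)
qed

end
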